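(* Let $n\ge 1$. (1) If the additive group $\mathbb{R}^n$ has a subgroup $G$ with $G\in\mathcal{N}\setminus\mathcal{M}$, then there is no translation invariant Borel hull operation on $\mathcal{N}$ with respect to $\mathcal{N}$. (2) If $\mathbb{R}^n$ has a subgroup $H$ with $H\in\mathcal{M}\setminus\mathcal{N}$, then there is no translation invariant Borel hull operation on $\mathcal{M}$ with respect to $\mathcal{M}$.
   Context: $\mathcal{N}$ is the $\sigma$-ideal of Lebesgue null subsets of $\mathbb{R}^n$, and $\mathcal{M}$ is the $\sigma$-ideal of meager subsets of $\mathbb{R}^n$. For $A\subseteq\mathbb{R}^n$ and $x\in\mathbb{R}^n$ put $A+x=\{a+x:a\in A\}$. For a $\sigma$-ideal $\mathcal{I}$ with a Borel base, i.e. every set in $\mathcal{I}$ is contained in a Borel set in $\mathcal{I}$, and a family $\mathcal{F}$ of sets, a Borel hull operation on $\mathcal{F}$ with respect to $\mathcal{I}$ is a map $\psi$ from $\mathcal{F}$ to the Borel sets such that $A\subseteq\psi(A)$ and $\psi(A)\setminus A\in\mathcal{I}$ for all $A\in\mathcal{F}$. When $\mathcal{I}$ and $\mathcal{F}$ are translation invariant families of subsets of $\mathbb{R}^n$, such a $\psi$ is translation invariant if $\psi(A+x)=\psi(A)+x$ for all $A\in\mathcal{F}$ and $x\in\mathbb{R}^n$. *)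

theory Defs
  imports "HOL-Analysis.Analysis"
begin

definition nowhere_dense :: "'a::topological_space set \<Rightarrow> bool" where
  "nowhere_dense A \<longleftrightarrow> interior (closure A) = {}"

definition meager :: "'a::topological_space set \<Rightarrow> bool" where
  "meager A \<longleftrightarrow> (\<exists>F :: nat \<Rightarrow> 'a set. (\<forall>k. nowhere_dense (F k)) \<and> A \<subseteq> (\<Union>k. F k))"

definition additive_subgroup :: "'a::ab_group_add set \<Rightarrow> bool" where
  "additive_subgroup G \<longleftrightarrow> 0 \<in> G \<and> (\<forall>x\<in>G. \<forall>y\<in>G. x - y \<in> G)"

definition borel_hull_op ::
  "'a::topological_space set set \<Rightarrow> 'a set set \<Rightarrow> ('a set \<Rightarrow> 'a set) \<Rightarrow> bool" where
  "borel_hull_op I F psi \<longleftrightarrow>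
     (\<forall>A\<in>F. psi A \<in> sets borel \<and> A \<subseteq> psi A \<and> psi A - A \<in> I)"

definition translation_invariant_op ::
  "'a::ab_group_add set set \<Rightarrow> ('a set \<Rightarrow> 'a set) \<Rightarrow> bool" where
  "translation_invariant_op F psi \<longleftrightarrow>
     (\<forall>A\<in>F. \<forall>x. psi ((\<lambda>a. a + x) ` A) = (\<lambda>a. a + x) ` psi A)"

end

theory Submission
  imports Defs
begin


lemma subg_neg: "additive_subgroup G \<Longrightarrow> x \<in> G \<Longrightarrow> - x \<in> G"
  unfolding additive_subgroup_def by (metis diff_0)

lemma subg_add: "additive_subgroup G \<Longrightarrow> x \<in> G \<Longrightarrow> y \<in> G \<Longrightarrow> x + y \<in> G"
  using subg_neg[of G y] unfolding additive_subgroup_def by (metis diff_minus_eq_add)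

lemma subg_diff: "additive_subgroup G \<Longrightarrow> x \<in> G \<Longrightarrow> y \<in> G \<Longrightarrow> x - y \<in> G"
  unfolding additive_subgroup_def by blast

lemma closure_subgroup:
  fixes G :: "'a::real_normed_vector set"
  assumes "additive_subgroup G"
  shows "additive_subgroup (closure G)"
  unfolding additive_subgroup_def
proof (intro conjI ballI)
  show "0 \<in> closure G" using assms closure_subset unfolding additive_subgroup_def by blast
  fix x y assume x: "x \<in> closure G" and y: "y \<in> closure G"
  show "x - y \<in> closure G"
    unfolding closure_approachable
  proof (intro allI impI)
    fix e :: real assume e: "e > 0"
    have ax: "\<forall>\<epsilon>>0. \<exists>z\<in>G. dist z x < \<epsilon>" using x by (simp only: closure_approachable)
    have ay: "\<forall>\<epsilon>>0. \<exists>z\<in>G. dist z y < \<epsilon>" using y by (simp only: closure_approachable)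
    have e2: "e/2 > 0" using e by simp
    obtain a where a: "a \<in> G" "dist a x < e/2" using ax e2 by blast
    obtain b where b: "b \<in> G" "dist b y < e/2" using ay e2 by blast
    have eqab: "(a - b) - (x - y) = (a - x) - (b - y)" by (simp add: algebra_simps)
    have "dist (a - b) (x - y) \<le> dist a x + dist b y"
      unfolding dist_norm eqab by (rule norm_triangle_ineq4)
    then have "dist (a - b) (x - y) < e" using a b by linarith
    then show "\<exists>z\<in>G. dist z (x - y) < e" using subg_diff[OF assms a(1) b(1)] by blast
  qed
qed

lemma ball_subgroup_univ:
  fixes C :: "'a::real_normed_vector set"
  assumes C: "additive_subgroup C" and r: "r > 0" and b: "ball 0 r \<subseteq> C"
  shows "C = UNIV"
proof -
  { fix y :: 'a
    obtain n :: nat where n: "norm y / r < real n" using reals_Archimedean2 by blast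
    have npos: "real n > 0" using n r by (smt (verit) divide_nonneg_pos norm_ge_zero)
    define v where "v = y /\<^sub>R real n"
    have "norm v < r" using n npos r unfolding v_def by (simp add: field_simps)
    then have v: "v \<in> C" using b by auto
    have mult: "real m *\<^sub>R v \<in> C" for m :: nat
    proof (induction m)
      case 0 then show ?case using C unfolding additive_subgroup_def by simp
    next
      case (Suc m)
      have "real (Suc m) *\<^sub>R v = real m *\<^sub>R v + v" by (simp add: algebra_simps)
      then show ?case using subg_add[OF C Suc v] by simp
    qed
    have "real n *\<^sub>R v = y" using npos unfolding v_def by simp
    then have "y \<in> C" using mult[of n] by simp }
  then show ?thesis by auto
qed

lemma meagerI: fixes F :: "nat \<Rightarrow> 'a::topological_space set" assumes "\<And>k. nowhere_dense (F k)" "A \<subseteq> (\<Union>k. F k)" shows "meager A"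
  unfolding meager_def
proof (intro exI[of _ F] conjI allI)
  fix k show "nowhere_dense (F k)" by (rule assms(1))
next
  show "A \<subseteq> (\<Union>k. F k)" by (rule assms(2))
qed

lemma meagerE: fixes A :: "'a::topological_space set" assumes "meager A"
  obtains F :: "nat \<Rightarrow> 'a set" where "\<And>k. nowhere_dense (F k)" "A \<subseteq> (\<Union>k. F k)"
proof -
  from assms obtain G :: "nat \<Rightarrow> 'a set" where "(\<forall>k. nowhere_dense (G k)) \<and> A \<subseteq> (\<Union>k. G k)"
    unfolding meager_def by (elim exE)
  then have h1: "\<And>k. nowhere_dense (G k)" and h2: "A \<subseteq> (\<Union>k. G k)" by auto
  show ?thesis by (rule that[OF h1 h2])
qed

lemma meager_empty: "meager {}"
  by (rule meagerI[of "\<lambda>_. {}"]) (auto simp: nowhere_dense_def)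

lemma meager_subset: assumes "meager B" "A \<subseteq> B" shows "meager A"
proof -
  from assms(1)[unfolded meager_def] obtain F :: "nat \<Rightarrow> _" where F0: "(\<forall>k. nowhere_dense (F k)) \<and> B \<subseteq> (\<Union>k. F k)" ..
  have F: "\<And>k. nowhere_dense (F k)" "B \<subseteq> (\<Union>k. F k)" using F0 by auto
  show ?thesis by (rule meagerI[of F]) (use F assms(2) in auto)
qed

lemma meager_UN:
  fixes A :: "nat \<Rightarrow> 'a::topological_space set"
  assumes "\<And>i::nat. meager (A i)"
  shows "meager (\<Union>i. A i)"
proof -
  have "\<forall>i. \<exists>F::nat \<Rightarrow> 'a set. (\<forall>k. nowhere_dense (F k)) \<and> A i \<subseteq> (\<Union>k. F k)"
  proof
    fix i
    from assms[of i, unfolded meager_def] show "\<exists>F::nat \<Rightarrow> 'a set. (\<forall>k. nowhere_dense (F k)) \<and> A i \<subseteq> (\<Union>k. F k)" .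
  qed
  from choice[OF this] obtain F :: "nat \<Rightarrow> nat \<Rightarrow> _" where F0: "\<forall>i. (\<forall>k. nowhere_dense (F i k)) \<and> A i \<subseteq> (\<Union>k. F i k)" ..
  have F: "\<And>i. (\<forall>k. nowhere_dense (F i k)) \<and> A i \<subseteq> (\<Union>k. F i k)" using F0 by blast
  define F' where "F' n = F (fst (prod_decode n)) (snd (prod_decode n))" for n
  have nd: "\<And>n. nowhere_dense (F' n)" unfolding F'_def using F by blast
  have "(\<Union>i. A i) \<subseteq> (\<Union>n. F' n)"
  proof
    fix x assume "x \<in> (\<Union>i. A i)"
    then obtain i where "x \<in> A i" by blast
    then obtain k where "x \<in> F i k" using F by blast
    moreover have "F' (prod_encode (i, k)) = F i k" unfolding F'_def by simp
    ultimately have "x \<in> F' (prod_encode (i, k))" by simp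
    then show "x \<in> (\<Union>n. F' n)" by blast
  qed
  then show ?thesis by (rule meagerI[OF nd])
qed

lemma meager_Un:
  assumes "meager A" "meager B" shows "meager (A \<union> B)"
proof -
  define C where "C i = (if i = (0::nat) then A else B)" for i
  have "A \<union> B = (\<Union>i. C i)"
  proof
    show "A \<union> B \<subseteq> (\<Union>i. C i)"
    proof
      fix x assume "x \<in> A \<union> B"
      then show "x \<in> (\<Union>i. C i)"
      proof
        assume "x \<in> A" then have "x \<in> C 0" by (simp add: C_def) then show ?thesis by blast
      next
        assume "x \<in> B" then have "x \<in> C 1" by (simp add: C_def) then show ?thesis by blast
      qed
    qed
    show "(\<Union>i. C i) \<subseteq> A \<union> B" unfolding C_def by auto
  qed
  moreover have "meager (\<Union>i. C i)"
    by (rule meager_UN) (simp add: C_def assms)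
  ultimately show ?thesis by simp
qed

lemma nowhere_dense_translate:
  fixes S :: "'a::real_normed_vector set"
  assumes "nowhere_dense S" shows "nowhere_dense ((\<lambda>a. a + c) ` S)"
proof -
  have "(\<lambda>a. a + c) ` S = (+) c ` S" by (auto simp: add.commute)
  moreover have "interior (closure ((+) c ` S)) = (+) c ` interior (closure S)"
    by (simp only: closure_translation interior_translation)
  ultimately show ?thesis using assms unfolding nowhere_dense_def by simp
qed

lemma meager_translate:
  fixes S :: "'a::real_normed_vector set"
  assumes "meager S" shows "meager ((\<lambda>a. a + c) ` S)"
proof -
  from assms[unfolded meager_def] obtain F :: "nat \<Rightarrow> _" where F0: "(\<forall>k. nowhere_dense (F k)) \<and> S \<subseteq> (\<Union>k. F k)" ..
  have F: "\<And>k. nowhere_dense (F k)" "S \<subseteq> (\<Union>k. F k)" using F0 by auto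
  have nd: "\<And>k. nowhere_dense ((\<lambda>a. a + c) ` F k)" using F(1) nowhere_dense_translate by blast
  have "(\<lambda>a. a + c) ` S \<subseteq> (\<Union>k. (\<lambda>a. a + c) ` F k)" using F(2) by blast
  then show ?thesis by (rule meagerI[OF nd])
qed

lemma open_not_meager:
  fixes W :: "'a::euclidean_space set"
  assumes W: "open W" "W \<noteq> {}"
  shows "\<not> meager W"
proof
  assume "meager W"
  then obtain F :: "nat \<Rightarrow> _" where F0: "(\<forall>k. nowhere_dense (F k)) \<and> W \<subseteq> (\<Union>k. F k)" unfolding meager_def ..
  have F: "\<And>k. nowhere_dense (F k)" "W \<subseteq> (\<Union>k. F k)" using F0 by auto
  define \<G> where "\<G> = range (\<lambda>k. - closure (F k))"
  have cG: "countable \<G>" unfolding \<G>_def by simp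
  have "UNIV \<subseteq> closure (\<Inter>\<G>)"
  proof (rule Baire[OF closed_UNIV cG])
    fix T assume "T \<in> \<G>"
    then obtain k where T: "T = - closure (F k)" unfolding \<G>_def by blast
    have i: "interior (closure (F k)) = {}" using F(1) unfolding nowhere_dense_def by blast
    have "closure T = - interior (closure (F k))" unfolding T by (rule closure_complement)
    then have cl: "closure T = UNIV" using i by simp
    have "open T" unfolding T by (simp add: open_Compl)
    then have "openin (top_of_set UNIV) T" by simp
    then show "openin (top_of_set UNIV) T \<and> UNIV \<subseteq> closure T" using cl by simp
  qed
  then have cl: "closure (\<Inter>\<G>) = UNIV" by blast
  have "W \<inter> closure (\<Inter>\<G>) \<noteq> {}" using W(2) unfolding cl by simp
  then have "W \<inter> (\<Inter>\<G>) \<noteq> {}" using open_Int_closure_eq_empty[OF W(1), of "\<Inter>\<G>"] by simp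
  then obtain x where x: "x \<in> W" "x \<in> \<Inter>\<G>" by blast
  then obtain k where "x \<in> F k" using F(2) by blast
  moreover have "x \<in> - closure (F k)" using x(2) unfolding \<G>_def by blast
  ultimately show False using closure_subset by blast
qed

lemma dense_of_nonmeager:
  fixes G :: "'a::real_normed_vector set"
  assumes G: "additive_subgroup G" and nm: "\<not> meager G"
  shows "closure G = UNIV"
proof -
  have "\<not> nowhere_dense G"
  proof
    assume "nowhere_dense G"
    then have "meager G" by (intro meagerI[of "\<lambda>_. G"]) auto
    then show False using nm by simp
  qed
  then obtain p where "p \<in> interior (closure G)" unfolding nowhere_dense_def by blast
  then obtain r where r: "r > 0" "ball p r \<subseteq> closure G"
    by (meson mem_interior)
  have C: "additive_subgroup (closure G)" using closure_subgroup[OF G] .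
  have pC: "p \<in> closure G" using r by auto
  have "ball 0 r \<subseteq> closure G"
  proof
    fix z :: 'a assume "z \<in> ball 0 r"
    then have "z + p \<in> ball p r" by (simp add: dist_norm)
    then have "z + p \<in> closure G" using r by auto
    then have "(z + p) - p \<in> closure G" using subg_diff[OF C _ pC] by blast
    then show "z \<in> closure G" by simp
  qed
  then show ?thesis using ball_subgroup_univ[OF C r(1)] by simp
qed

definition bp :: "'a::topological_space set \<Rightarrow> bool" where
  "bp A \<longleftrightarrow> (\<exists>Q. open Q \<and> meager ((A - Q) \<union> (Q - A)))"

lemma borel_bp:
  fixes A :: "'a::real_normed_vector set"
  assumes "A \<in> sets borel" shows "bp A"
proof -
  have "A \<in> sigma_sets UNIV {S. open S}" using assms sets_borel by blast
  then show ?thesis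
  proof (induction rule: sigma_sets.induct)
    case (Basic a)
    have "meager ((a - a) \<union> (a - a))" by (simp add: meager_empty)
    then show ?case using Basic unfolding bp_def by blast
  next
    case Empty
    have "meager (({} - {}) \<union> ({} - {}))" by (simp add: meager_empty)
    then show ?case unfolding bp_def using open_empty by blast
  next
    case (Compl a)
    then obtain Q where Q: "open Q" "meager ((a - Q) \<union> (Q - a))" unfolding bp_def by blast
    have fr: "nowhere_dense (closure Q - Q)"
      unfolding nowhere_dense_def
    proof (rule ccontr)
      assume "interior (closure (closure Q - Q)) \<noteq> {}"
      moreover have "closure (closure Q - Q) = closure Q - Q"
        using Q(1) by (simp add: closed_Diff closure_closed)
      ultimately obtain x where x: "x \<in> interior (closure Q - Q)" by auto
      let ?I = "interior (closure Q - Q)"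
      have "?I \<inter> closure Q \<noteq> {}" using x interior_subset by blast
      then have "?I \<inter> Q \<noteq> {}" using open_Int_closure_eq_empty[of ?I Q] by auto
      then show False using interior_subset by blast
    qed
    then have "meager (closure Q - Q)" by (intro meagerI[of "\<lambda>_. closure Q - Q"]) auto
    then have "meager (((a - Q) \<union> (Q - a)) \<union> (closure Q - Q))" using Q(2) meager_Un by blast
    moreover have "((UNIV - a) - (- closure Q)) \<union> ((- closure Q) - (UNIV - a)) \<subseteq> ((a - Q) \<union> (Q - a)) \<union> (closure Q - Q)"
      using closure_subset by blast
    ultimately have "meager (((UNIV - a) - (- closure Q)) \<union> ((- closure Q) - (UNIV - a)))"
      by (rule meager_subset)
    moreover have "open (- closure Q)" by auto
    ultimately show ?case unfolding bp_def by blast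
  next
    case (Union a)
    then have "\<forall>i. \<exists>V. open V \<and> meager ((a i - V) \<union> (V - a i))" unfolding bp_def by blast
    from choice[OF this] obtain Q where Q: "\<And>i. open (Q i) \<and> meager ((a i - Q i) \<union> (Q i - a i))"
      by blast
    have "meager (\<Union>i. (a i - Q i) \<union> (Q i - a i))" using Q by (intro meager_UN) auto
    moreover have "((\<Union>i. a i) - (\<Union>i. Q i)) \<union> ((\<Union>i. Q i) - (\<Union>i. a i)) \<subseteq> (\<Union>i. (a i - Q i) \<union> (Q i - a i))"
      by blast
    moreover have "open (\<Union>i. Q i)" using Q by auto
    ultimately show ?case unfolding bp_def using meager_subset by blast
  qed
qed



lemma steinhaus:
  fixes D :: "'a::euclidean_space set"
  assumes Dm: "D \<in> sets lebesgue" and Dn: "D \<notin> null_sets lebesgue"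
  shows "\<exists>\<delta>>0. \<forall>h. norm h < \<delta> \<longrightarrow> (\<exists>a\<in>D. \<exists>b\<in>D. h = a - b)"
proof -
  have "\<exists>n::nat. D \<inter> cball 0 (real n) \<notin> null_sets lebesgue"
  proof (rule ccontr)
    assume "\<not> ?thesis"
    then have "(\<Union>n::nat. D \<inter> cball 0 (real n)) \<in> null_sets lebesgue" by (intro null_sets_UN) auto
    moreover have "(\<Union>n::nat. D \<inter> cball 0 (real n)) = D"
      by (auto simp: real_arch_simple)
    ultimately show False using Dn by simp
  qed
  then obtain n::nat where n: "D \<inter> cball 0 (real n) \<notin> null_sets lebesgue" by blast
  define D' where "D' = D \<inter> cball 0 (real n)"
  have D'm: "D' \<in> lmeasurable"
    unfolding D'_def using Dm by (intro bounded_set_imp_lmeasurable) auto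
  have mpos: "measure lebesgue D' > 0"
  proof -
    have "measure lebesgue D' \<noteq> 0"
    proof
      assume "measure lebesgue D' = 0"
      then have "emeasure lebesgue D' = 0" using D'm by (simp add: emeasure_eq_measure2)
      then have "D' \<in> null_sets lebesgue" using D'm by (intro null_setsI) auto
      then show False using n unfolding D'_def by simp
    qed
    then show ?thesis by (simp add: zero_less_measure_iff)
  qed
  obtain T where T: "closed T" "T \<subseteq> D'" "D' - T \<in> lmeasurable" "emeasure lebesgue (D' - T) < ennreal (measure lebesgue D' / 2)"
    using sets_lebesgue_inner_closed[of D' "measure lebesgue D' / 2"] D'm mpos by auto
  have Tc: "compact T"
    using T(1,2) unfolding D'_def by (meson bounded_cball bounded_subset compact_eq_bounded_closed inf.boundedE)
  have Tm: "T \<in> lmeasurable" using Tc lmeasurable_compact by blast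
  have "measure lebesgue (D' - T) < measure lebesgue D' / 2"
    using T(3,4) mpos by (simp add: emeasure_eq_measure2 ennreal_less_iff)
  moreover have "measure lebesgue D' = measure lebesgue T + measure lebesgue (D' - T)"
    using T(2) Tm T(3) by (metis Diff_disjoint Diff_partition fmeasurableD measure_Un3 diff_zero inf.commute measure_empty sup_commute)
  ultimately have Tpos: "measure lebesgue T > measure lebesgue D' / 2" by linarith
  obtain U where U: "open U" "T \<subseteq> U" "U - T \<in> lmeasurable" "emeasure lebesgue (U - T) < ennreal (measure lebesgue T)"
    using sets_lebesgue_outer_open[of T "measure lebesgue T"] Tm Tpos mpos by auto
  have UT: "measure lebesgue (U - T) < measure lebesgue T"
    using U(3,4) Tpos mpos by (simp add: emeasure_eq_measure2 ennreal_less_iff)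
  have Um: "U \<in> lmeasurable"
    using U(2,3) Tm by (metis Diff_partition fmeasurable.Un)
  have Ueq: "measure lebesgue U = measure lebesgue T + measure lebesgue (U - T)"
    using U(2) Tm U(3) by (metis Diff_disjoint Diff_partition fmeasurableD measure_Un3 diff_zero inf.commute measure_empty sup_commute)
  obtain \<epsilon> where e: "\<epsilon> > 0" "(\<Union>x\<in>T. ball x \<epsilon>) \<subseteq> U"
    using compact_subset_open_imp_ball_epsilon_subset[OF Tc U(1) U(2)] by blast
  show ?thesis
  proof (intro exI[of _ \<epsilon>] conjI allI impI e(1))
    fix h :: 'a assume h: "norm h < \<epsilon>"
    show "\<exists>a\<in>D. \<exists>b\<in>D. h = a - b"
    proof (rule ccontr)
      assume nh: "\<not> ?thesis"
      have disj: "T \<inter> (+) h ` T = {}"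
      proof (rule ccontr)
        assume "T \<inter> (+) h ` T \<noteq> {}"
        then obtain y where "y \<in> T" "h + y \<in> T" by auto
        then show False using nh T(2) unfolding D'_def
          by (metis Int_iff add_diff_cancel_right' subsetD)
      qed
      have sub: "(+) h ` T \<subseteq> U"
      proof
        fix z assume "z \<in> (+) h ` T"
        then obtain y where y: "y \<in> T" "z = h + y" by auto
        have "z \<in> ball y \<epsilon>" using h y by (simp add: dist_norm)
        then show "z \<in> U" using e(2) y by blast
      qed
      have hTm: "(+) h ` T \<in> lmeasurable" using Tm measurable_translation by blast
      have "measure lebesgue (T \<union> (+) h ` T) = measure lebesgue T + measure lebesgue ((+) h ` T)"
        using disj Tm hTm by (simp add: measure_Un3 fmeasurableD)
      also have "\<dots> = 2 * measure lebesgue T" by (simp add: measure_translation)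
      finally have "2 * measure lebesgue T \<le> measure lebesgue U"
        using sub U(2) Um by (metis fmeasurableD fmeasurable.Un hTm Tm Un_least measure_mono_fmeasurable)
      then show False using Ueq UT by linarith
    qed
  qed
qed



lemma fubini_shift:
  fixes A C :: "'a::euclidean_space set"
  assumes A: "A \<in> sets borel" and C: "C \<in> sets borel"
    and An: "emeasure lborel A \<noteq> 0" and Cn: "emeasure lborel C \<noteq> 0"
  shows "\<exists>t. emeasure lborel {y. y \<in> A \<and> y + t \<in> C} \<noteq> 0"
proof (rule ccontr)
  assume H: "\<not> ?thesis"
  define S where "S = {p::'a\<times>'a. fst p \<in> A \<and> fst p + snd p \<in> C}"
  have Sm: "S \<in> sets (lborel \<Otimes>\<^sub>M lborel)"
  proof -
    have m1: "(\<lambda>p::'a\<times>'a. fst p + snd p) \<in> borel_measurable (lborel \<Otimes>\<^sub>M lborel)"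
      by measurable
    have m2: "(\<lambda>p::'a\<times>'a. fst p) \<in> borel_measurable (lborel \<Otimes>\<^sub>M lborel)"
      by measurable
    have "S = (fst -` A \<inter> space (lborel \<Otimes>\<^sub>M lborel)) \<inter> ((\<lambda>p. fst p + snd p) -` C \<inter> space (lborel \<Otimes>\<^sub>M lborel))"
      by (auto simp: S_def space_pair_measure)
    also have "\<dots> \<in> sets (lborel \<Otimes>\<^sub>M lborel)"
      using measurable_sets[OF m1 C] measurable_sets[OF m2 A] by auto
    finally show ?thesis .
  qed
  have "emeasure (lborel \<Otimes>\<^sub>M lborel) S = (\<integral>\<^sup>+t. emeasure lborel ((\<lambda>x. (x, t)) -` S) \<partial>lborel)"
    by (rule lborel_pair.emeasure_pair_measure_alt2[OF Sm])
  also have "\<dots> = 0"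
  proof -
    have "\<And>t. (\<lambda>x. (x, t)) -` S = {y. y \<in> A \<and> y + t \<in> C}"
      by (auto simp: S_def)
    then show ?thesis using H by simp
  qed
  finally have z: "emeasure (lborel \<Otimes>\<^sub>M lborel) S = 0" .
  have "emeasure (lborel \<Otimes>\<^sub>M lborel) S = (\<integral>\<^sup>+y. emeasure lborel (Pair y -` S) \<partial>lborel)"
    by (rule lborel.emeasure_pair_measure_alt[OF Sm])
  also have "\<dots> = (\<integral>\<^sup>+y. emeasure lborel C * indicator A y \<partial>lborel)"
  proof (rule nn_integral_cong)
    fix y
    have tr: "emeasure lborel ((+) y -` C) = emeasure lborel C"
    proof -
      have "emeasure (distr lborel borel ((+) y)) C = emeasure lborel C"
        by (simp add: lborel_distr_plus)
      then show ?thesis using C by (simp add: emeasure_distr)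
    qed
    show "emeasure lborel (Pair y -` S) = emeasure lborel C * indicator A y"
    proof (cases "y \<in> A")
      case True
      then have "Pair y -` S = (+) y -` C" by (auto simp: S_def)
      then show ?thesis using True tr by simp
    next
      case False
      then have "Pair y -` S = {}" by (auto simp: S_def)
      then show ?thesis using False by simp
    qed
  qed
  also have "\<dots> = emeasure lborel C * emeasure lborel A"
    using A by (simp add: nn_integral_cmult)
  finally show False using z An Cn by simp
qed


lemma null_translate_leb:
  fixes A :: "'a::euclidean_space set"
  assumes "A \<in> null_sets lebesgue"
  shows "(\<lambda>y. y + c) ` A \<in> null_sets lebesgue"
proof -
  from assms[unfolded null_sets_completion_iff2] obtain N where N: "N \<in> null_sets lborel" "A \<subseteq> N" ..
  have n1: "{x. x - c \<in> N} \<in> null_sets lborel" using null_sets_translation[OF N(1)] .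
  have n2: "(\<lambda>y. y + c) ` A \<subseteq> {x. x - c \<in> N}" using N(2) by auto
  have ex: "\<exists>N'\<in>null_sets lborel. (\<lambda>y. y + c) ` A \<subseteq> N'" using n1 n2 by (rule bexI[rotated])
  show ?thesis by (subst null_sets_completion_iff2) (rule ex)
qed

lemma borel_null_iff:
  fixes B :: "'a::euclidean_space set"
  assumes "B \<in> sets borel"
  shows "B \<in> null_sets lebesgue \<longleftrightarrow> B \<in> null_sets lborel"
  using assms null_sets_completion_iff[of B lborel] by simp

lemma UNIV_not_null: "(UNIV :: 'a::euclidean_space set) \<notin> null_sets lebesgue"
proof
  assume "(UNIV :: 'a set) \<in> null_sets lebesgue"
  then have "(UNIV :: 'a set) \<in> null_sets lborel" using borel_null_iff[of "UNIV::'a set"] by simp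
  then have "emeasure lborel (UNIV :: 'a set) = 0" by auto
  then show False by simp
qed

lemma dense_of_nonnull:
  fixes G :: "'a::euclidean_space set"
  assumes G: "additive_subgroup G" and nn: "G \<notin> null_sets lebesgue"
  shows "closure G = UNIV"
proof -
  let ?C = "closure G"
  have C: "additive_subgroup ?C" using closure_subgroup[OF G] .
  have Cb: "?C \<in> sets borel" by (simp add: borel_closed)
  then have Cm: "?C \<in> sets lebesgue" by (simp add: sets_completionI_sets)
  have Cn: "?C \<notin> null_sets lebesgue"
    using nn closure_subset null_sets_completion_subset by blast
  obtain d where d: "d > 0" "\<forall>h. norm h < d \<longrightarrow> (\<exists>a\<in>?C. \<exists>b\<in>?C. h = a - b)"
    using steinhaus[OF Cm Cn] by blast
  have "ball 0 d \<subseteq> ?C"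
  proof
    fix h :: 'a assume "h \<in> ball 0 d"
    then have "norm h < d" by simp
    then obtain a b where "a \<in> ?C" "b \<in> ?C" "h = a - b" using d by blast
    then show "h \<in> ?C" using subg_diff[OF C] by blast
  qed
  then show ?thesis using ball_subgroup_univ[OF C d(1)] by simp
qed

lemma inv_lemma:
  fixes G :: "'a::ab_group_add set"
  assumes G: "additive_subgroup G" and GF: "G \<in> F" and ti: "translation_invariant_op F psi"
    and g: "g \<in> G"
  shows "y \<in> psi G \<longleftrightarrow> y + g \<in> psi G"
proof -
  have "(\<lambda>a. a + g) ` G = G"
  proof
    show "(\<lambda>a. a + g) ` G \<subseteq> G" using subg_add[OF G _ g] by blast
    show "G \<subseteq> (\<lambda>a. a + g) ` G"
    proof
      fix x assume "x \<in> G"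
      then have "x - g \<in> G" using subg_diff[OF G _ g] by blast
      moreover have "x = (x - g) + g" by simp
      ultimately show "x \<in> (\<lambda>a. a + g) ` G" by blast
    qed
  qed
  moreover have "psi ((\<lambda>a. a + g) ` G) = (\<lambda>a. a + g) ` psi G"
    using ti GF unfolding translation_invariant_op_def by blast
  ultimately have eq: "psi G = (\<lambda>a. a + g) ` psi G" by simp
  show ?thesis
  proof
    assume "y \<in> psi G" then show "y + g \<in> psi G" by (subst eq) blast
  next
    assume "y + g \<in> psi G"
    then have "y + g \<in> (\<lambda>a. a + g) ` psi G" by (subst (asm) eq)
    then show "y \<in> psi G" by auto
  qed
qed

lemma part1:
  fixes G :: "'a::euclidean_space set" and psi :: "'a set \<Rightarrow> 'a set"
  assumes G: "additive_subgroup G" and Gn: "G \<in> null_sets lebesgue" and Gm: "\<not> meager G"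
    and hull: "borel_hull_op (null_sets lebesgue) (null_sets lebesgue) psi"
    and ti: "translation_invariant_op (null_sets lebesgue) psi"
  shows False
proof -
  define B where "B = psi G"
  have Bb: "B \<in> sets borel" and GB: "G \<subseteq> B" and BG: "B - G \<in> null_sets lebesgue"
    using hull Gn unfolding borel_hull_op_def B_def by auto
  have inv: "\<And>g y. g \<in> G \<Longrightarrow> y \<in> B \<longleftrightarrow> y + g \<in> B"
    unfolding B_def using inv_lemma[OF G Gn ti] by blast
  have "B = G \<union> (B - G)" using GB by blast
  moreover have "G \<union> (B - G) \<in> null_sets lebesgue" using Gn BG by (rule null_sets.Un)
  ultimately have Bn: "B \<in> null_sets lebesgue" by simp
  have "B \<noteq> UNIV" using Bn UNIV_not_null by auto
  then obtain x where x: "x \<notin> B" by auto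
  define Gx where "Gx = (\<lambda>a. a + x) ` G"
  have GxB: "Gx \<subseteq> - B"
  proof
    fix z assume "z \<in> Gx"
    then obtain g where g: "g \<in> G" "z = g + x" unfolding Gx_def by blast
    show "z \<in> - B"
    proof
      assume "z \<in> B"
      then have "x + g \<in> B" using g by (simp add: add.commute)
      then have "x \<in> B" using inv[OF g(1)] by blast
      then show False using x by simp
    qed
  qed
  have Gxm: "\<not> meager Gx"
  proof
    assume "meager Gx"
    then have "meager ((\<lambda>a. a + (- x)) ` Gx)" by (rule meager_translate)
    moreover have "(\<lambda>a. a + (- x)) ` Gx = G" unfolding Gx_def by (auto simp: image_image)
    ultimately show False using Gm by simp
  qed
  from borel_bp[OF Bb, unfolded bp_def] obtain U where U0: "open U \<and> meager ((B - U) \<union> (U - B))" ..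
  then have U: "open U" "meager ((B - U) \<union> (U - B))" by auto
  have Une: "U \<noteq> {}"
  proof
    assume "U = {}"
    then have "meager B" using U(2) by simp
    then show False using Gm GB meager_subset by blast
  qed
  have UB: "meager (U - B)" using U(2) meager_subset by blast
  have Bcb: "- B \<in> sets borel" using Bb by (rule borel_comp)
  from borel_bp[OF Bcb, unfolded bp_def] obtain V where V0: "open V \<and> meager ((- B - V) \<union> (V - - B))" ..
  then have V: "open V" "meager ((- B - V) \<union> (V - - B))" by auto
  have Vne: "V \<noteq> {}"
  proof
    assume "V = {}"
    then have "meager (- B)" using V(2) by simp
    then show False using Gxm GxB meager_subset by blast
  qed
  have VB: "meager (V \<inter> B)" using V(2) meager_subset by blast
  have dense: "closure G = UNIV" using dense_of_nonmeager[OF G Gm] .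
  obtain u0 where u0: "u0 \<in> U" using Une by blast
  obtain r1 where r1: "r1 > 0" "ball u0 r1 \<subseteq> U" using U(1) u0 open_contains_ball by blast
  obtain v0 where v0: "v0 \<in> V" using Vne by blast
  obtain r2 where r2: "r2 > 0" "ball v0 r2 \<subseteq> V" using V(1) v0 open_contains_ball by blast
  define r where "r = min r1 r2"
  have r: "r > 0" using r1 r2 unfolding r_def by simp
  have "v0 - u0 \<in> closure G" using dense by simp
  then have ap: "\<forall>\<epsilon>>0. \<exists>z\<in>G. dist z (v0 - u0) < \<epsilon>" by (simp only: closure_approachable)
  obtain g where g: "g \<in> G" "dist g (v0 - u0) < r" using ap r by blast
  have rr: "r \<le> r1" "r \<le> r2" unfolding r_def by auto
  have dg: "0 \<le> dist g (v0 - u0)" by simp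
  define s where "s = r - dist g (v0 - u0)"
  have s: "s > 0" using g unfolding s_def by simp
  have "ball v0 s \<subseteq> (V \<inter> B) \<union> ((\<lambda>a. a + g) ` (U - B))"
  proof
    fix w assume w: "w \<in> ball v0 s"
    have dw: "dist v0 w < s" using w by simp
    have "s \<le> r2" using s_def rr dg by linarith
    then have wV: "w \<in> V" using r2 dw by auto
    show "w \<in> (V \<inter> B) \<union> ((\<lambda>a. a + g) ` (U - B))"
    proof (cases "w \<in> B")
      case True then show ?thesis using wV by blast
    next
      case False
      have eqw: "u0 - (w - g) = (v0 - w) + (g - (v0 - u0))" by (simp add: algebra_simps)
      have "dist u0 (w - g) \<le> dist v0 w + dist g (v0 - u0)"
        unfolding dist_norm eqw by (rule norm_triangle_ineq)
      then have "dist u0 (w - g) < r1" using dw s_def rr by linarith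
      then have "w - g \<in> U" using r1 by auto
      moreover have "w - g \<notin> B" using False inv[OF g(1), of "w - g"] by simp
      moreover have "w = (w - g) + g" by simp
      ultimately show ?thesis by blast
    qed
  qed
  moreover have "meager ((V \<inter> B) \<union> ((\<lambda>a. a + g) ` (U - B)))"
    using meager_Un[OF VB meager_translate[OF UB]] .
  ultimately have "meager (ball v0 s)" by (rule meager_subset[rotated])
  moreover have "ball v0 s \<noteq> {}" using s by simp
  ultimately show False using open_not_meager[of "ball v0 s"] by simp
qed

lemma part2:
  fixes H :: "'a::euclidean_space set" and psi :: "'a set \<Rightarrow> 'a set"
  assumes H: "additive_subgroup H" and Hm: "meager H" and Hn: "H \<notin> null_sets lebesgue"
    and hull: "borel_hull_op (Collect meager) (Collect meager) psi"
    and ti: "translation_invariant_op (Collect meager) psi"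
  shows False
proof -
  define B where "B = psi H"
  have Bb: "B \<in> sets borel" and HB: "H \<subseteq> B" and BH: "meager (B - H)"
    using hull Hm unfolding borel_hull_op_def B_def by auto
  have inv: "\<And>g y. g \<in> H \<Longrightarrow> y \<in> B \<longleftrightarrow> y + g \<in> B"
    unfolding B_def using inv_lemma[OF H _ ti] Hm by blast
  have "B = H \<union> (B - H)" using HB by blast
  moreover have "meager (H \<union> (B - H))" using Hm BH by (rule meager_Un)
  ultimately have Bm: "meager B" by simp
  obtain x where x: "x \<notin> B"
  proof -
    have "B \<noteq> UNIV" using Bm open_not_meager[of "UNIV :: 'a set"] by auto
    then show ?thesis using that by blast
  qed
  define Hx where "Hx = (\<lambda>a. a + x) ` H"
  have HxB: "Hx \<subseteq> - B"
  proof
    fix z assume "z \<in> Hx"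
    then obtain g where g: "g \<in> H" "z = g + x" unfolding Hx_def by blast
    show "z \<in> - B"
    proof
      assume "z \<in> B"
      then have "x + g \<in> B" using g by (simp add: add.commute)
      then have "x \<in> B" using inv[OF g(1)] by blast
      then show False using x by simp
    qed
  qed
  have Hxn: "Hx \<notin> null_sets lebesgue"
  proof
    assume "Hx \<in> null_sets lebesgue"
    then have "(\<lambda>a. a + (- x)) ` Hx \<in> null_sets lebesgue" by (rule null_translate_leb)
    moreover have "(\<lambda>a. a + (- x)) ` Hx = H" unfolding Hx_def by (auto simp: image_image)
    ultimately show False using Hn by simp
  qed
  have Bcb: "- B \<in> sets borel" using Bb by (rule borel_comp)
  have Bnl: "emeasure lborel B \<noteq> 0"
  proof
    assume "emeasure lborel B = 0"
    then have "B \<in> null_sets lborel" using Bb by (intro null_setsI) auto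
    then have "B \<in> null_sets lebesgue" using borel_null_iff[OF Bb] by simp
    then show False using Hn HB null_sets_completion_subset by blast
  qed
  have Bcnl: "emeasure lborel (- B) \<noteq> 0"
  proof
    assume "emeasure lborel (- B) = 0"
    then have "- B \<in> null_sets lborel" using Bcb by (intro null_setsI) auto
    then have "- B \<in> null_sets lebesgue" using borel_null_iff[OF Bcb] by simp
    then show False using Hxn HxB null_sets_completion_subset by blast
  qed
  obtain t where t: "emeasure lborel {y. y \<in> B \<and> y + t \<in> - B} \<noteq> 0"
    using fubini_shift[OF Bb Bcb Bnl Bcnl] by blast
  define D where "D = {y. y \<in> B \<and> y + t \<in> - B}"
  have Db: "D \<in> sets borel"
  proof -
    have m: "(\<lambda>y::'a. y + t) \<in> borel_measurable borel" by simp
    have "D = B \<inter> ((\<lambda>y. y + t) -` (- B) \<inter> space borel)" unfolding D_def by auto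
    also have "\<dots> \<in> sets borel" using measurable_sets[OF m Bcb] Bb by auto
    finally show ?thesis .
  qed
  have Dm: "D \<in> sets lebesgue" using Db by (simp add: sets_completionI_sets)
  have Dn: "D \<notin> null_sets lebesgue"
  proof
    assume "D \<in> null_sets lebesgue"
    then have "D \<in> null_sets lborel" using borel_null_iff[OF Db] by simp
    then show False using t unfolding D_def by auto
  qed
  obtain d where d: "d > 0" "\<forall>h. norm h < d \<longrightarrow> (\<exists>a\<in>D. \<exists>b\<in>D. h = a - b)"
    using steinhaus[OF Dm Dn] by blast
  have dense: "closure H = UNIV" using dense_of_nonnull[OF H Hn] .
  have "- t \<in> closure H" using dense by simp
  then have ap: "\<forall>\<epsilon>>0. \<exists>z\<in>H. dist z (- t) < \<epsilon>" by (simp only: closure_approachable)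
  obtain h where h: "h \<in> H" "dist h (- t) < d" using ap d(1) by blast
  have "norm (h + t) < d" using h(2) by (simp add: dist_norm)
  then obtain a b where ab: "a \<in> D" "b \<in> D" "h + t = a - b" using d(2) by blast
  have aB: "a \<in> B" using ab(1) unfolding D_def by simp
  have cB: "b + t \<notin> B" using ab(2) unfolding D_def by simp
  have "(b + t) + h = a" using ab(3) by (simp add: algebra_simps)
  then have "b + t \<in> B" using inv[OF h(1), of "b + t"] aB by simp
  then show False using cB by simp
qed

theorem theorem2p2:
  shows "((\<exists>G :: (real ^ 'n) set. additive_subgroup G \<and> G \<in> null_sets lebesgue \<and> \<not> meager G) \<longrightarrow>
           \<not> (\<exists>psi :: (real ^ 'n) set \<Rightarrow> (real ^ 'n) set. borel_hull_op (null_sets lebesgue) (null_sets lebesgue) psi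
                   \<and> translation_invariant_op (null_sets lebesgue) psi))
       \<and> ((\<exists>H :: (real ^ 'n) set. additive_subgroup H \<and> meager H \<and> H \<notin> null_sets lebesgue) \<longrightarrow>
           \<not> (\<exists>psi :: (real ^ 'n) set \<Rightarrow> (real ^ 'n) set. borel_hull_op (Collect meager) (Collect meager) psi
                   \<and> translation_invariant_op (Collect meager) psi))"
  using part1 part2 by blast

end
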